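(* Let $I\subseteq\mathbb{R}$ be an open interval (possibly unbounded), $\Sigma=I\times\mathbb{R}$, $m>1$ an integer, and let $F\in C^\omega(\Sigma,\mathbb{R}^2)$ be a non-singular map of the form $F(x,y)=\big(p_m(x)y^m+p_1(x)y+p_0(x),\;q_m(x)y^m+q_1(x)y+q_0(x)\big)$ with $p_m,q_m\in C^\omega(I,\mathbb{R})$. Set $d_{1m}(x)=p_1(x)q_m(x)-q_1(x)p_m(x)$ and $d^*_{1m}(x)=p_1'(x)q_m(x)-q_1'(x)p_m(x)$. Suppose at least one of the following holds: (i) $d_{1m}(x)\neq0$ for all $x\in I$; (ii) for every $x\in I$, $d_{1m}(x)=0$ implies $d^*_{1m}(x)\neq0$; (iii) $m$ is even and for every $x\in I$, $d_{1m}(x)=0$ implies $q_m(x)\neq0$; (iii$'$) $m$ is even and for every $x\in I$, $d_{1m}(x)=0$ implies $p_m(x)\neq0$; (iv) $m$ is odd and for every $x\in I$, $d_{1m}(x)=0$ implies $q_m(x)\neq0$ and $q_1(x)\le0$; (iv$'$) $m$ is odd and for every $x\in I$, $d_{1m}(x)=0$ implies $p_m(x)\neq0$ and $p_1(x)\le0$. Then $F$ is injective.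
   Context: For $F=(P,Q)$, $d_F=P_xQ_y-P_yQ_x$ is the Jacobian determinant; $F$ is non-singular if $d_F(x,y)\neq0$ for all $(x,y)\in\Sigma$. $C^\omega$ denotes real analytic functions. *)

theory Defs
  imports "HOL-Analysis.Analysis"
begin

definition real_analytic_on :: "(real \<Rightarrow> real) \<Rightarrow> real set \<Rightarrow> bool" where
  "real_analytic_on f S \<longleftrightarrow>
     (\<forall>x\<in>S. \<exists>r>0. \<exists>a::nat \<Rightarrow> real.
        \<forall>y. \<bar>y - x\<bar> < r \<longrightarrow> (\<lambda>n. a n * (y - x) ^ n) sums f y)"

definition jac_det :: "(real \<times> real \<Rightarrow> real \<times> real) \<Rightarrow> real \<Rightarrow> real \<Rightarrow> real" where
  "jac_det F x y =
     deriv (\<lambda>t. fst (F (t, y))) x * deriv (\<lambda>t. snd (F (x, t))) y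
   - deriv (\<lambda>t. fst (F (x, t))) y * deriv (\<lambda>t. snd (F (t, y))) x"

end

theory Submission
  imports Defs "HOL-Computational_Algebra.Polynomial"
begin


lemma odd_poly_root_pos:
  fixes p :: "real poly"
  assumes "odd (degree p)" "lead_coeff p > 0"
  shows "\<exists>x. poly p x = 0"
proof -
  obtain n1 where n1: "\<forall>x\<ge>n1. poly p x \<ge> lead_coeff p"
    using poly_pinfty_gt_lc[OF assms(2)] by blast
  define q where "q = - pcompose p [:0, -1:]"
  have dq: "degree q = degree p" by (simp add: q_def degree_pcompose)
  have "lead_coeff q = - (lead_coeff p * (-1) ^ degree p)"
    unfolding q_def by (subst lead_coeff_minus, subst lead_coeff_comp) auto
  then have lq: "lead_coeff q = lead_coeff p" using assms(1) by simp
  obtain n2 where n2: "\<forall>x\<ge>n2. poly q x \<ge> lead_coeff q"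
    using poly_pinfty_gt_lc[of q] lq assms(2) by auto
  define b where "b = max n1 0"
  define a where "a = - max n2 0"
  have "poly p b \<ge> lead_coeff p" using n1 by (simp add: b_def)
  then have pb: "poly p b > 0" using assms(2) by linarith
  have "poly q (- a) \<ge> lead_coeff q" using n2 by (simp add: a_def)
  then have "poly q (- a) > 0" using lq assms(2) by linarith
  then have pa: "poly p a < 0" by (simp add: q_def poly_pcompose)
  have "a \<le> b" by (simp add: a_def b_def)
  from IVT[of "poly p" a 0 b] pa pb \<open>a \<le> b\<close> show ?thesis by auto
qed

lemma odd_poly_root:
  fixes p :: "real poly"
  assumes "odd (degree p)"
  shows "\<exists>x. poly p x = 0"
proof (cases "lead_coeff p > 0")
  case True then show ?thesis using odd_poly_root_pos assms by blast
next
  case False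
  have "p \<noteq> 0" using assms by auto
  then have "lead_coeff p < 0" using False by (simp add: not_less le_less)
  then have "lead_coeff (-p) > 0" by simp
  then obtain x where "poly (-p) x = 0" using odd_poly_root_pos[of "-p"] assms by auto
  then show ?thesis by auto
qed

lemma root5:
  fixes A B C D E y :: real
  assumes "odd n" "A \<noteq> 0" "k1 < n" "k2 < n" "k3 < n"
  shows "\<exists>y. A*y^n + B*y^k1 + C*y^k2 + D*y^k3 + E = 0"
proof -
  define p where "p = monom A n + monom B k1 + monom C k2 + monom D k3 + monom E 0"
  have "degree p \<le> n" unfolding p_def using assms
    by (intro degree_add_le degree_monom_le[THEN order.trans]; simp)+
  moreover have "coeff p n = A" using assms by (simp add: p_def coeff_monom)
  then have "n \<le> degree p" using assms(2) by (intro le_degree) simp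
  ultimately have "degree p = n" by simp
  then obtain y where "poly p y = 0" using odd_poly_root assms by metis
  then show ?thesis by (auto simp: p_def poly_monom)
qed

lemma zero_deriv_on_open:
  fixes f :: "real \<Rightarrow> real"
  assumes "open S" "x \<in> S" "\<And>y. y \<in> S \<Longrightarrow> f y = 0" "(f has_real_derivative f') (at x)"
  shows "f' = 0"
proof -
  have "((\<lambda>_. 0::real) has_real_derivative 0) (at x)" by simp
  then have "(f has_real_derivative 0) (at x)"
    by (rule has_field_derivative_transform_within_open[OF _ assms(1,2)]) (use assms(3) in auto)
  then show ?thesis using assms(4) DERIV_unique by blast
qed

lemma rolle_on:
  fixes f :: "real \<Rightarrow> real"
  assumes "is_interval S" "a \<in> S" "b \<in> S" "a \<noteq> b" "f a = f b"
    "\<And>x. x \<in> S \<Longrightarrow> (f has_real_derivative f' x) (at x)"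
  shows "\<exists>z\<in>S. f' z = 0"
proof -
  have *: "\<exists>z\<in>S. f' z = 0" if "a' < b'" "a' \<in> S" "b' \<in> S" "f a' = f b'" for a' b'
  proof -
    have sub: "x \<in> S" if "a' \<le> x" "x \<le> b'" for x
      using mem_is_interval_1_I[OF assms(1) \<open>a' \<in> S\<close> \<open>b' \<in> S\<close>] that by auto
    from MVT2[OF \<open>a' < b'\<close>, of f f'] sub assms(6)
    obtain z where "a' < z" "z < b'" "f b' - f a' = (b' - a') * f' z" by auto
    then show ?thesis using that sub[of z] by auto
  qed
  show ?thesis using assms * [of a b] *[of b a] by (cases "a < b") auto
qed

lemma analytic_deriv:
  assumes "real_analytic_on f S" "x \<in> S"
  shows "(f has_real_derivative deriv f x) (at x)"
proof -
  obtain r a where r: "r > 0" and s: "\<And>y. \<bar>y - x\<bar> < r \<Longrightarrow> (\<lambda>n. a n * (y - x) ^ n) sums f y"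
    using assms unfolding real_analytic_on_def by blast
  define g where "g t = (\<Sum>n. a n * t ^ n)" for t
  have gf: "g (y - x) = f y" if "\<bar>y - x\<bar> < r" for y
    using s[OF that] unfolding g_def by (simp add: sums_iff)
  have "(g has_real_derivative (\<Sum>n. diffs a n * 0^n)) (at 0)"
    unfolding g_def
  proof (rule termdiffs_strong')
    fix z :: real assume "norm z < r"
    then show "summable (\<lambda>n. a n * z ^ n)" using s[of "x + z"] by (auto simp: sums_iff)
  qed (use r in auto)
  then have gd: "(g has_real_derivative (\<Sum>n. diffs a n * 0^n)) (at ((\<lambda>y. y - x) x))" by simp
  have ld: "((\<lambda>y. y - x) has_real_derivative 1) (at x)" by (auto intro!: derivative_eq_intros)
  have "((\<lambda>y. g (y - x)) has_real_derivative (\<Sum>n. diffs a n * 0^n)) (at x)"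
    using DERIV_chain2[OF gd ld] by simp
  then have "(f has_real_derivative (\<Sum>n. diffs a n * 0^n)) (at x)"
    by (rule has_field_derivative_transform_within_open[where S = "ball x r"])
       (use r gf in \<open>auto simp: dist_real_def abs_minus_commute\<close>)
  then have "f differentiable at x" using real_differentiable_def by blast
  then show ?thesis using DERIV_deriv_iff_real_differentiable by blast
qed



lemma jac_expand:
  fixes y z ym y2 :: real
  assumes "ym = y*z" "y2 = y*z*z"
  shows "(A*ym + B*y + C)*(M*qm*z + q1) - (M*pm*z + p1)*(D*ym + E*y + G)
       = M*(A*qm - pm*D)*y2 + (A*q1 - p1*D + M*(B*qm - pm*E))*ym + M*(C*qm - pm*G)*z + (B*q1 - p1*E)*y + (C*q1 - p1*G)"
  using assms by (simp add: algebra_simps)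

lemma rot_id:
  fixes a b pm qm pmd qmd p1 q1 p0 q0 p1d q1d p0d q0d M y ym z :: real
  assumes "b*pm = a*qm" "b*pmd = a*qmd"
  shows "(a^2+b^2) * ((pmd*ym + p1d*y + p0d)*(M*qm*z + q1) - (M*pm*z + p1)*(qmd*ym + q1d*y + q0d))
     = ((a*pmd+b*qmd)*ym + (a*p1d+b*q1d)*y + (a*p0d+b*q0d))*(a*q1-b*p1)
       - (M*(a*pm+b*qm)*z + (a*p1+b*q1))*((a*q1d-b*p1d)*y + (a*q0d-b*p0d))"
  using assms by algebra

lemma wr_id:
  fixes a b pm qm pmd qmd :: real
  shows "2*(b*pm - a*qm)*(b*pmd - a*qmd)*(pm^2+qm^2) - (b*pm - a*qm)^2*(2*pm*pmd + 2*qm*qmd)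
     = 2*(b*pm - a*qm)*(b*qm + a*pm)*(pmd*qm - pm*qmd)"
  by algebra

lemma jt_expand:
  fixes y z ym :: real
  assumes "ym = y*z"
  shows "(Pd*ym + Ud*y + Vd)*R - (M*P*z + U)*(Rd*y + Sd)
     = (Pd*R - M*P*Rd)*ym + (-M*P*Sd)*z + (Ud*R - U*Rd)*y + 0 + (Vd*R - U*Sd)"
  using assms by (simp add: algebra_simps)



theorem theorem2:
  fixes I :: "real set" and m :: nat
    and pm p1 p0 qm q1 q0 :: "real \<Rightarrow> real"
    and F :: "real \<times> real \<Rightarrow> real \<times> real"
  assumes I_open: "open I" and I_interval: "is_interval I" and I_ne: "I \<noteq> {}"
    and m_gt: "m > 1"
    and an: "real_analytic_on pm I" "real_analytic_on p1 I" "real_analytic_on p0 I"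
            "real_analytic_on qm I" "real_analytic_on q1 I" "real_analytic_on q0 I"
    and F_def: "\<And>x y. F (x, y) =
        (pm x * y ^ m + p1 x * y + p0 x, qm x * y ^ m + q1 x * y + q0 x)"
    and nonsing: "\<And>x y. x \<in> I \<Longrightarrow> jac_det F x y \<noteq> 0"
    and cases:
      "(\<forall>x\<in>I. p1 x * qm x - q1 x * pm x \<noteq> 0)
     \<or> (\<forall>x\<in>I. p1 x * qm x - q1 x * pm x = 0 \<longrightarrow>
                 deriv p1 x * qm x - deriv q1 x * pm x \<noteq> 0)
     \<or> (even m \<and> (\<forall>x\<in>I. p1 x * qm x - q1 x * pm x = 0 \<longrightarrow> qm x \<noteq> 0))
     \<or> (even m \<and> (\<forall>x\<in>I. p1 x * qm x - q1 x * pm x = 0 \<longrightarrow> pm x \<noteq> 0))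
     \<or> (odd m \<and> (\<forall>x\<in>I. p1 x * qm x - q1 x * pm x = 0 \<longrightarrow> qm x \<noteq> 0 \<and> q1 x \<le> 0))
     \<or> (odd m \<and> (\<forall>x\<in>I. p1 x * qm x - q1 x * pm x = 0 \<longrightarrow> pm x \<noteq> 0 \<and> p1 x \<le> 0))"
  shows "inj_on F (I \<times> UNIV)"
proof -
  have dpm: "\<And>x. x \<in> I \<Longrightarrow> (pm has_real_derivative deriv pm x) (at x)"
    using analytic_deriv an(1) by blast
  have dp1: "\<And>x. x \<in> I \<Longrightarrow> (p1 has_real_derivative deriv p1 x) (at x)"
    using analytic_deriv an(2) by blast
  have dp0: "\<And>x. x \<in> I \<Longrightarrow> (p0 has_real_derivative deriv p0 x) (at x)"
    using analytic_deriv an(3) by blast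
  have dqm: "\<And>x. x \<in> I \<Longrightarrow> (qm has_real_derivative deriv qm x) (at x)"
    using analytic_deriv an(4) by blast
  have dq1: "\<And>x. x \<in> I \<Longrightarrow> (q1 has_real_derivative deriv q1 x) (at x)"
    using analytic_deriv an(5) by blast
  have dq0: "\<And>x. x \<in> I \<Longrightarrow> (q0 has_real_derivative deriv q0 x) (at x)"
    using analytic_deriv an(6) by blast
  have m0: "m > 0" using m_gt by simp
  have pow_m: "\<And>y::real. y^m = y * y^(m-1)" using m0 by (cases m) auto
  have jac: "jac_det F x y = (deriv pm x * y^m + deriv p1 x * y + deriv p0 x) * (real m * qm x * y^(m-1) + q1 x)
      - (real m * pm x * y^(m-1) + p1 x) * (deriv qm x * y^m + deriv q1 x * y + deriv q0 x)"
    if x: "x \<in> I" for x y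
  proof -
    have e1: "(\<lambda>t. fst (F (t, y))) = (\<lambda>t. pm t * y^m + p1 t * y + p0 t)" by (simp add: F_def)
    have e2: "(\<lambda>t. snd (F (x, t))) = (\<lambda>t. qm x * t^m + q1 x * t + q0 x)" by (simp add: F_def)
    have e3: "(\<lambda>t. fst (F (x, t))) = (\<lambda>t. pm x * t^m + p1 x * t + p0 x)" by (simp add: F_def)
    have e4: "(\<lambda>t. snd (F (t, y))) = (\<lambda>t. qm t * y^m + q1 t * y + q0 t)" by (simp add: F_def)
    have d1: "deriv (\<lambda>t. pm t * y^m + p1 t * y + p0 t) x = deriv pm x * y^m + deriv p1 x * y + deriv p0 x"
      by (rule DERIV_imp_deriv) (auto intro!: derivative_eq_intros dpm[OF x] dp1[OF x] dp0[OF x])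
    have d4: "deriv (\<lambda>t. qm t * y^m + q1 t * y + q0 t) x = deriv qm x * y^m + deriv q1 x * y + deriv q0 x"
      by (rule DERIV_imp_deriv) (auto intro!: derivative_eq_intros dqm[OF x] dq1[OF x] dq0[OF x])
    have d2: "deriv (\<lambda>t. qm x * t^m + q1 x * t + q0 x) y = real m * qm x * y^(m-1) + q1 x"
      by (rule DERIV_imp_deriv) (auto intro!: derivative_eq_intros)
    have d3: "deriv (\<lambda>t. pm x * t^m + p1 x * t + p0 x) y = real m * pm x * y^(m-1) + p1 x"
      by (rule DERIV_imp_deriv) (auto intro!: derivative_eq_intros)
    show ?thesis unfolding jac_det_def e1 e2 e3 e4 d1 d2 d3 d4 ..
  qed
  have W: "deriv pm x * qm x - pm x * deriv qm x = 0" if x: "x \<in> I" for x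
  proof (rule ccontr)
    assume W: "deriv pm x * qm x - pm x * deriv qm x \<noteq> 0"
    have o: "odd (2*m-1)" using m0 by simp
    have l1: "m < 2*m-1" "m-1 < 2*m-1" "1 < 2*m-1" using m_gt by auto
    have nzA: "real m * (deriv pm x * qm x - pm x * deriv qm x) \<noteq> 0" using W m0 by simp
    from root5[OF o nzA l1, of "deriv pm x * q1 x - p1 x * deriv qm x + real m * (deriv p1 x * qm x - pm x * deriv q1 x)"
        "real m * (deriv p0 x * qm x - pm x * deriv q0 x)" "deriv p1 x * q1 x - p1 x * deriv q1 x"
        "deriv p0 x * q1 x - p1 x * deriv q0 x"]
    obtain y where "real m * (deriv pm x * qm x - pm x * deriv qm x) * y^(2*m-1)
       + (deriv pm x * q1 x - p1 x * deriv qm x + real m * (deriv p1 x * qm x - pm x * deriv q1 x)) * y^m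
       + (real m * (deriv p0 x * qm x - pm x * deriv q0 x)) * y^(m-1)
       + (deriv p1 x * q1 x - p1 x * deriv q1 x) * y^1 + (deriv p0 x * q1 x - p1 x * deriv q0 x) = 0"
      by blast
    moreover have "y^(2*m-1) = y * y^(m-1) * y^(m-1)"
    proof -
      have "2*m-1 = 1 + (m-1) + (m-1)" using m0 by simp
      then have "y^(2*m-1) = y^(1 + (m-1) + (m-1))" by (rule arg_cong)
      also have "\<dots> = y * y^(m-1) * y^(m-1)" by (simp only: power_add power_one_right)
      finally show ?thesis .
    qed
    ultimately have "jac_det F x y = 0"
      unfolding jac[OF x] by (subst jac_expand[OF pow_m]) (auto simp: algebra_simps)
    then show False using nonsing[OF x] by simp
  qed
  have nz: "pm x \<noteq> 0 \<or> qm x \<noteq> 0" if x: "x \<in> I" for x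
  proof (rule ccontr)
    assume "\<not> (pm x \<noteq> 0 \<or> qm x \<noteq> 0)"
    then have z: "pm x = 0" "qm x = 0" by auto
    have d: "p1 x * qm x - q1 x * pm x = 0" "deriv p1 x * qm x - deriv q1 x * pm x = 0"
      by (simp_all add: z)
    show False using cases d z x by blast
  qed
  show ?thesis
  proof (rule inj_onI, clarify)
    fix x1 y1 x2 y2 assume x1: "x1 \<in> I" and x2: "x2 \<in> I" and Feq: "F (x1, y1) = F (x2, y2)"
    define a where "a = pm x1"
    define b where "b = qm x1"
    have abnz: "a \<noteq> 0 \<or> b \<noteq> 0" using nz[OF x1] by (simp add: a_def b_def)
    have Kpos: "a^2 + b^2 > 0" using abnz by (simp add: sum_power2_gt_zero_iff)
    define N where "N x = pm x ^ 2 + qm x ^ 2" for x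
    have Npos: "N x > 0" if "x \<in> I" for x using nz[OF that] by (simp add: N_def sum_power2_gt_zero_iff)
    define G where "G x = (b * pm x - a * qm x)^2 / N x" for x
    have Gd: "(G has_real_derivative 0) (at x within I)" if x: "x \<in> I" for x
    proof -
      have "(G has_real_derivative
          (2*(b*pm x - a*qm x)*(b*deriv pm x - a*deriv qm x)*(pm x^2+qm x^2)
            - (b*pm x - a*qm x)^2*(2*pm x*deriv pm x + 2*qm x*deriv qm x)) / (N x * N x)) (at x)"
        unfolding G_def N_def
        apply (rule derivative_eq_intros refl dpm[OF x] dqm[OF x])+
        using nz[OF x] apply auto[1]
        by (simp add: algebra_simps power2_eq_square)
      moreover have "(2*(b*pm x - a*qm x)*(b*deriv pm x - a*deriv qm x)*(pm x^2+qm x^2)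
            - (b*pm x - a*qm x)^2*(2*pm x*deriv pm x + 2*qm x*deriv qm x)) = 0"
        unfolding wr_id using W[OF x] by simp
      ultimately show ?thesis by (auto intro: has_field_derivative_at_within)
    qed
    obtain cG where cG: "\<And>x. x \<in> I \<Longrightarrow> G x = cG"
      using has_field_derivative_zero_constant[OF is_interval_convex[OF I_interval] Gd] by blast
    have "G x1 = 0" by (simp add: G_def a_def b_def mult.commute)
    then have h: "b * pm x = a * qm x" if "x \<in> I" for x
      using cG[OF that] cG[OF x1] Npos[OF that] by (auto simp: G_def)
    have hd: "b * deriv pm x = a * deriv qm x" if x: "x \<in> I" for x
    proof -
      have "((\<lambda>x. b * pm x - a * qm x) has_real_derivative b * deriv pm x - a * deriv qm x) (at x)"
        by (auto intro!: derivative_eq_intros dpm[OF x] dqm[OF x])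
      from zero_deriv_on_open[OF I_open x _ this] h show ?thesis by simp
    qed
    define Ph where "Ph x = a * pm x + b * qm x" for x
    define u where "u x = a * p1 x + b * q1 x" for x
    define v where "v x = a * p0 x + b * q0 x" for x
    define r where "r x = a * q1 x - b * p1 x" for x
    define s where "s x = a * q0 x - b * p0 x" for x
    define Phd where "Phd x = a * deriv pm x + b * deriv qm x" for x
    define ud where "ud x = a * deriv p1 x + b * deriv q1 x" for x
    define vd where "vd x = a * deriv p0 x + b * deriv q0 x" for x
    define rd where "rd x = a * deriv q1 x - b * deriv p1 x" for x
    define sd where "sd x = a * deriv q0 x - b * deriv p0 x" for x
    have dPh: "(Ph has_real_derivative Phd x) (at x)" if x: "x \<in> I" for x
      unfolding Ph_def[abs_def] Phd_def by (auto intro!: derivative_eq_intros dpm[OF x] dqm[OF x])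
    have du: "(u has_real_derivative ud x) (at x)" if x: "x \<in> I" for x
      unfolding u_def[abs_def] ud_def by (auto intro!: derivative_eq_intros dp1[OF x] dq1[OF x])
    have dv: "(v has_real_derivative vd x) (at x)" if x: "x \<in> I" for x
      unfolding v_def[abs_def] vd_def by (auto intro!: derivative_eq_intros dp0[OF x] dq0[OF x])
    have dr: "(r has_real_derivative rd x) (at x)" if x: "x \<in> I" for x
      unfolding r_def[abs_def] rd_def by (auto intro!: derivative_eq_intros dp1[OF x] dq1[OF x])
    have ds: "(s has_real_derivative sd x) (at x)" if x: "x \<in> I" for x
      unfolding s_def[abs_def] sd_def by (auto intro!: derivative_eq_intros dp0[OF x] dq0[OF x])
    define JT where "JT x y = (Phd x * y^m + ud x * y + vd x) * r x
        - (real m * Ph x * y^(m-1) + u x) * (rd x * y + sd x)" for x y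
    have JTnz: "JT x y \<noteq> 0" if x: "x \<in> I" for x y
    proof -
      have "(a^2+b^2) * jac_det F x y = JT x y"
        unfolding jac[OF x] JT_def Ph_def u_def v_def r_def s_def Phd_def ud_def vd_def rd_def sd_def
        by (rule rot_id[OF h[OF x] hd[OF x]])
      then show ?thesis using nonsing[OF x] Kpos by auto
    qed
    have Phnz: "Ph x \<noteq> 0" if x: "x \<in> I" for x
    proof
      assume "Ph x = 0"
      then have "a * pm x + b * qm x = 0" by (simp add: Ph_def)
      moreover have "b * pm x - a * qm x = 0" using h[OF x] by simp
      ultimately have "(a^2+b^2) * pm x = 0" "(a^2+b^2) * qm x = 0" by algebra+
      then show False using Kpos nz[OF x] by auto
    qed
    define Pt where "Pt x y = Ph x * y^m + u x * y + v x" for x y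
    define Qt where "Qt x y = r x * y + s x" for x y
    have PtF: "Pt x y = a * fst (F (x,y)) + b * snd (F (x,y))" for x y
      by (simp add: Pt_def F_def Ph_def u_def v_def algebra_simps)
    have QtF: "Qt x y = - b * fst (F (x,y)) + a * snd (F (x,y))" if x: "x \<in> I" for x y
    proof -
      have "- b * fst (F (x,y)) + a * snd (F (x,y)) = (a * qm x - b * pm x) * y^m + r x * y + s x"
        by (simp add: F_def r_def s_def algebra_simps)
      then show ?thesis using h[OF x] by (simp add: Qt_def)
    qed
    have Pteq: "Pt x1 y1 = Pt x2 y2" using Feq by (simp add: PtF)
    have Qteq: "Qt x1 y1 = Qt x2 y2" using Feq by (simp add: QtF x1 x2)
    have dPt: "((\<lambda>y. Pt x y) has_real_derivative real m * Ph x * y^(m-1) + u x) (at y)" for x y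
      unfolding Pt_def by (auto intro!: derivative_eq_intros)
    show "x1 = x2 \<and> y1 = y2"
    proof (rule ccontr)
      assume ne: "\<not> (x1 = x2 \<and> y1 = y2)"
      show False
      proof (cases "x1 = x2")
        case True
        then have yne: "y1 \<noteq> y2" using ne by simp
        have "r x1 * (y1 - y2) = 0" using Qteq True by (simp add: Qt_def algebra_simps)
        then have r0: "r x1 = 0" using yne by simp
        obtain z where "real m * Ph x1 * z^(m-1) + u x1 = 0"
          using rolle_on[of UNIV y1 y2 "\<lambda>y. Pt x1 y" "\<lambda>y. real m * Ph x1 * y^(m-1) + u x1", OF _ _ _ yne]
            Pteq True dPt by auto
        then have "JT x1 z = 0" by (simp add: JT_def r0)
        then show False using JTnz[OF x1] by simp
      next
        case False
        note xne = False
        show False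
        proof (cases "\<forall>x\<in>I. r x \<noteq> 0")
          case True
          define c where "c = Qt x1 y1"
          define Y where "Y x = (c - s x) / r x" for x
          have Yi: "Y x1 = y1" "Y x2 = y2"
            using True x1 x2 Qteq by (auto simp: Y_def c_def Qt_def field_simps)
          define g where "g x = Pt x (Y x)" for x
          have dY: "(Y has_real_derivative - (sd x + rd x * Y x) / r x) (at x)" if x: "x \<in> I" for x
            unfolding Y_def[abs_def]
            apply (rule derivative_eq_intros refl ds[OF x] dr[OF x])+
            using True x by (auto simp: Y_def field_simps)
          have dg: "(g has_real_derivative JT x (Y x) / r x) (at x)" if x: "x \<in> I" for x
            unfolding g_def[abs_def] Pt_def
            apply (rule derivative_eq_intros refl dPh[OF x] du[OF x] dv[OF x] dY[OF x])+
            using True x by (auto simp: JT_def field_simps)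
          obtain z where z: "z \<in> I" "JT z (Y z) / r z = 0"
            using rolle_on[OF I_interval x1 x2 xne, of g, OF _ dg] Pteq Yi by (auto simp: g_def)
          then show False using JTnz[OF z(1)] True by auto
        next
          case False
          then obtain x0 where x0: "x0 \<in> I" "r x0 = 0" by auto
          have rd0: "rd x0 = 0"
          proof (rule ccontr)
            assume "rd x0 \<noteq> 0"
            then have "JT x0 (- sd x0 / rd x0) = 0" by (simp add: JT_def x0)
            then show False using JTnz[OF x0(1)] by simp
          qed
          show False
          proof (cases "even m")
            case True
            define y where "y = root (m-1) (- u x0 / (real m * Ph x0))"
            have "odd (m-1)" using True m0 by simp
            then have "y^(m-1) = - u x0 / (real m * Ph x0)" by (simp add: y_def odd_real_root_pow)
            then have "real m * Ph x0 * y^(m-1) + u x0 = 0" using Phnz[OF x0(1)] m0 by simp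
            then have "JT x0 y = 0" by (simp add: JT_def x0)
            then show False using JTnz[OF x0(1)] by simp
          next
            case False
            then have om: "odd m" by simp
            have coef: "Phd x * r x - real m * Ph x * rd x = 0" if x: "x \<in> I" for x
            proof (rule ccontr)
              assume cnz: "Phd x * r x - real m * Ph x * rd x \<noteq> 0"
              have l: "m-1 < m" "1 < m" "0 < m" using m_gt by auto
              from root5[OF om cnz l, of "- real m * Ph x * sd x" "ud x * r x - u x * rd x" 0
                  "vd x * r x - u x * sd x"]
              obtain y where "(Phd x * r x - real m * Ph x * rd x) * y^m + (- real m * Ph x * sd x) * y^(m-1)
                  + (ud x * r x - u x * rd x) * y^1 + 0 * y^0 + (vd x * r x - u x * sd x) = 0"
                by blast
              then have "JT x y = 0" unfolding JT_def
                by (subst jt_expand[OF pow_m]) simp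
              then show False using JTnz[OF x] by simp
            qed
            define H where "H x = r x ^ m / Ph x" for x
            have Hd: "(H has_real_derivative 0) (at x within I)" if x: "x \<in> I" for x
            proof -
              have "(H has_real_derivative
                  (real m * r x ^ (m-1) * rd x * Ph x - r x ^ m * Phd x) / (Ph x * Ph x)) (at x)"
                unfolding H_def[abs_def]
                apply (rule derivative_eq_intros refl dr[OF x] dPh[OF x])+
                using Phnz[OF x] by (auto simp: algebra_simps)
              moreover have "real m * r x ^ (m-1) * rd x * Ph x - r x ^ m * Phd x
                  = (- (r x ^ (m-1))) * (Phd x * r x - real m * Ph x * rd x)"
                using pow_m[of "r x"] by (simp add: algebra_simps)
              ultimately show ?thesis using coef[OF x] by (auto intro: has_field_derivative_at_within)
            qed
            obtain cH where cH: "\<And>x. x \<in> I \<Longrightarrow> H x = cH"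
              using has_field_derivative_zero_constant[OF is_interval_convex[OF I_interval] Hd] by blast
            have "H x0 = 0" using x0 m0 by (simp add: H_def)
            then have r0: "r x = 0" if "x \<in> I" for x
            proof -
              have "r x ^ m / Ph x = 0" using cH[OF that] cH[OF x0(1)] \<open>H x0 = 0\<close> by (simp add: H_def)
              then show ?thesis using Phnz[OF that] by simp
            qed
            have rdz: "rd x = 0" if x: "x \<in> I" for x
              using zero_deriv_on_open[OF I_open x r0 dr[OF x]] .
            have "s x1 = s x2" using Qteq r0[OF x1] r0[OF x2] by (simp add: Qt_def)
            then obtain z where z: "z \<in> I" "sd z = 0"
              using rolle_on[OF I_interval x1 x2 xne, of s sd] ds by auto
            then have "JT z 0 = 0" by (simp add: JT_def r0 rdz)
            then show False using JTnz[OF z(1)] by simp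
          qed
        qed
      qed
    qed
  qed
qed

end
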